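(* Assume the weak form of Szpiro's conjecture. Let $u\geq 1$ be a positive integer, $r\geq1$, and $A_1,\dots,A_r$ fixed positive integers. Then the equation $$\prod_{i=1}^r A_i^{n_i}n_i! = x^2-u^2$$ has only finitely many solutions $(n_1,\dots,n_r,x)$ in positive integers $n_1,\dots,n_r$ and integers $x$.
   Context: For a nonzero integer $a$, $N(a)=\prod_{p\mid a}p$ is its radical. Weak form of Szpiro's conjecture: there exists a constant $s>0$ such that for all pairwise coprime nonzero integers $A,B,C$ with $A+B=C$ one has $|ABC|<N(ABC)^{s}$. *)

theory Defs
  imports Complex_Main "HOL-Computational_Algebra.Primes"
begin

definition radical :: "int \<Rightarrow> int" where
  "radical a = (\<Prod>p\<in>prime_factors a. p)"

definition weak_szpiro :: bool where
  "weak_szpiro \<longleftrightarrow> (\<exists>s::real. s > 0 \<and>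
     (\<forall>A B C :: int. A \<noteq> 0 \<longrightarrow> B \<noteq> 0 \<longrightarrow> C \<noteq> 0 \<longrightarrow>
        coprime A B \<longrightarrow> coprime A C \<longrightarrow> coprime B C \<longrightarrow> A + B = C \<longrightarrow>
        real_of_int \<bar>A * B * C\<bar> < real_of_int (radical (A * B * C)) powr s))"

end

theory Submission imports Defs begin

definition primorial :: "nat \<Rightarrow> nat" where
  "primorial n = \<Prod>{p. prime p \<and> p \<le> n}"

lemma finite_primes_le: "finite {p::nat. prime p \<and> p \<le> n}" by auto

lemma prod_primes_dvd:
  fixes T :: "nat set"
  assumes "finite T" "\<forall>p\<in>T. prime p \<and> p dvd k"
  shows "\<Prod>T dvd k"
  using assms
proof (induction T rule: finite_induct)
  case empty then show ?case by simp
next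
  case (insert p T)
  have "coprime p (\<Prod>T)"
  proof (rule prod_coprime_right)
    fix i assume "i \<in> T"
    then show "coprime p i" using insert.hyps(2) insert.prems by (intro primes_coprime) auto
  qed
  then show ?case using insert by (simp add: divides_mult)
qed

lemma binom_mid_le: "(2*m+1) choose m \<le> 4^m"
proof -
  have s: "(2*m+1) choose m = (2*m+1) choose (m+1)"
    using binomial_symmetric[of m "2*m+1"] by simp
  have "((2*m+1) choose m) + ((2*m+1) choose (m+1)) = (\<Sum>k\<in>{m,m+1}. (2*m+1) choose k)" by simp
  also have "\<dots> \<le> (\<Sum>k\<le>2*m+1. (2*m+1) choose k)"
    by (rule sum_mono2) auto
  also have "\<dots> = 2^(2*m+1)" by (rule choose_row_sum)
  finally have "2 * ((2*m+1) choose m) \<le> 2 * 4^m" using s by (simp add: power_mult)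
  then show ?thesis by simp
qed

lemma prime_dvd_binom:
  assumes "prime p" "m+1 < p" "p \<le> 2*m+1"
  shows "p dvd ((2*m+1) choose m)"
proof -
  have e: "fact m * fact (2*m+1-m) * ((2*m+1) choose m) = (fact (2*m+1) :: nat)"
    by (rule binomial_fact_lemma) simp
  have "p dvd (fact (2*m+1) :: nat)" using prime_dvd_fact_iff[OF assms(1), of "2*m+1"] assms(3) by blast
  hence "p dvd fact m * fact (m+1) * ((2*m+1) choose m)" using e
    by (metis add.commute add_diff_cancel_left' mult_2 add.assoc)
  moreover have "\<not> p dvd (fact m :: nat)" using assms by (simp add: prime_dvd_fact_iff)
  moreover have "\<not> p dvd (fact (m+1) :: nat)" using prime_dvd_fact_iff[OF assms(1), of "m+1"] assms(2) by linarith
  ultimately show ?thesis using assms(1) by (simp add: prime_dvd_mult_iff)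
qed

lemma primorial_le: "primorial n \<le> 4^n"
proof (induction n rule: less_induct)
  case (less n)
  show ?case
  proof (cases "n \<le> 2")
    case True
    then have "n = 0 \<or> n = 1 \<or> n = 2" by auto
    moreover have E: "{p::nat. prime p \<and> p \<le> 0} = {}" "{p::nat. prime p \<and> p \<le> 1} = {}"
      "{p::nat. prime p \<and> p \<le> 2} = {2}"
      subgoal using prime_ge_2_nat by (metis (mono_tags, lifting) Collect_empty_eq le_trans numeral_le_one_iff semiring_norm(69) zero_le_one)
      subgoal using prime_ge_2_nat by (metis (mono_tags, lifting) Collect_empty_eq le_trans numeral_le_one_iff semiring_norm(69))
      subgoal proof (rule set_eqI, rule iffI)
        fix p :: nat assume "p \<in> {p. prime p \<and> p \<le> 2}"
        then show "p \<in> {2}" using prime_ge_2_nat[of p] by simp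
      qed simp
      done
    moreover have "primorial 0 = 1" "primorial 1 = 1" "primorial 2 = 2"
      unfolding primorial_def by (simp only: E; simp)+
    ultimately show ?thesis by auto
  next
    case False
    show ?thesis
    proof (cases "even n")
      case True
      have "{p::nat. prime p \<and> p \<le> n} = {p. prime p \<and> p \<le> n - 1}"
      proof (rule Collect_cong, rule iffI)
        fix p :: nat assume h: "prime p \<and> p \<le> n"
        have "p \<noteq> n" using h True False prime_odd_nat[of n] by auto
        thus "prime p \<and> p \<le> n - 1" using h by auto
      qed auto
      hence "primorial n = primorial (n-1)" unfolding primorial_def by simp
      also have "\<dots> \<le> 4^(n-1)" using less False by simp
      also have "\<dots> \<le> 4^n" by (rule power_increasing) auto
      finally show ?thesis .
    next
      case odd: False
      then obtain m where n: "n = 2*m+1" by (metis oddE)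
      have m1: "m \<ge> 1" using False n by simp
      define T where "T = {p::nat. prime p \<and> m+1 < p \<and> p \<le> 2*m+1}"
      have split: "{p::nat. prime p \<and> p \<le> n} = {p. prime p \<and> p \<le> m+1} \<union> T"
        unfolding T_def n by auto
      have disj: "{p::nat. prime p \<and> p \<le> m+1} \<inter> T = {}" unfolding T_def by auto
      have fT: "finite T" unfolding T_def by auto
      have "primorial n = primorial (m+1) * \<Prod>T"
        unfolding primorial_def split by (rule prod.union_disjoint) (use disj fT in auto)
      moreover have "primorial (m+1) \<le> 4^(m+1)" using less.IH[of "m+1"] n m1 by linarith
      moreover have "\<Prod>T \<le> 4^m"
      proof -
        have "\<Prod>T dvd ((2*m+1) choose m)"
          using fT prime_dvd_binom unfolding T_def by (intro prod_primes_dvd) auto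
        hence "\<Prod>T \<le> (2*m+1) choose m"
          by (rule dvd_imp_le) (simp add: zero_less_binomial_iff)
        then show ?thesis using binom_mid_le order_trans by blast
      qed
      ultimately have "primorial n \<le> 4^(m+1) * 4^m" by (metis mult_le_mono)
      also have "\<dots> = 4^(2*m+1)" by (simp add: power_add[symmetric] mult_2)
      finally show ?thesis using n by simp
    qed
  qed
qed


lemma prod_subset_le:
  fixes B :: "int set"
  assumes "finite B" "A \<subseteq> B" "\<forall>p\<in>B. p \<ge> 1"
  shows "\<Prod>A \<le> \<Prod>B"
proof -
  have "\<Prod>B = \<Prod>(B - A) * \<Prod>A" using assms by (simp add: prod.subset_diff)
  moreover have "\<Prod>(B - A) \<ge> 1" using assms by (intro prod_ge_1) auto
  moreover have "\<Prod>A \<ge> 1" using assms by (intro prod_ge_1) auto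
  ultimately show ?thesis using mult_right_mono[of 1 "\<Prod>(B - A)" "\<Prod>A"] by simp
qed

lemma pf_ge1: assumes "p \<in> prime_factors (a::int)" shows "p \<ge> 1"
proof -
  have "prime p" using assms in_prime_factors_iff by blast
  then show ?thesis using prime_ge_2_int[of p] by linarith
qed

lemma rad_ge1: "radical a \<ge> 1"
  unfolding radical_def by (intro prod_ge_1) (auto dest: pf_ge1)

lemma rad_dvd: assumes "a dvd b" "b \<noteq> 0" shows "radical a \<le> radical b"
proof -
  have "prime_factors a \<subseteq> prime_factors b"
    using assms by (auto simp: in_prime_factors_iff intro: dvd_trans)
  then show ?thesis unfolding radical_def
    by (intro prod_subset_le) (auto dest: pf_ge1)
qed

lemma rad_mult: assumes "a \<noteq> 0" "b \<noteq> 0" shows "radical (a*b) \<le> radical a * radical b"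
proof -
  let ?A = "prime_factors a" and ?B = "prime_factors b"
  have "\<Prod>(?A \<union> ?B) * \<Prod>(?A \<inter> ?B) = \<Prod>?A * \<Prod>?B"
    by (rule prod.union_inter) auto
  moreover have "\<Prod>(?A \<inter> ?B) \<ge> 1" by (intro prod_ge_1) (auto dest: pf_ge1)
  moreover have "\<Prod>(?A \<union> ?B) \<ge> 1" by (intro prod_ge_1) (auto dest: pf_ge1)
  ultimately have "\<Prod>(?A \<union> ?B) \<le> \<Prod>?A * \<Prod>?B"
    using mult_left_mono[of 1 "\<Prod>(?A \<inter> ?B)" "\<Prod>(?A \<union> ?B)"] by simp
  then show ?thesis unfolding radical_def using prime_factors_product[OF assms] by simp
qed

lemma rad_nat_bound:
  assumes "P > 0" "\<forall>p. prime p \<and> p dvd P \<longrightarrow> p \<le> L"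
  shows "radical (int P) \<le> int (primorial L)"
proof -
  have sub: "prime_factors (int P) \<subseteq> int ` {p. prime p \<and> p \<le> L}"
  proof
    fix q assume q: "q \<in> prime_factors (int P)"
    hence qp: "prime q" "q dvd int P" by (auto simp: in_prime_factors_iff)
    hence q0: "q \<ge> 0" by (simp add: prime_ge_0_int)
    hence qe: "q = int (nat q)" by simp
    have "prime (int (nat q))" using qp(1) qe by simp
    hence "prime (nat q)" by (simp only: prime_nat_int_transfer)
    moreover have "int (nat q) dvd int P" using qp(2) qe by simp
    hence "nat q dvd P" by (simp only: int_dvd_int_iff)
    ultimately have "nat q \<le> L" using assms by blast
    with \<open>prime (nat q)\<close> qe show "q \<in> int ` {p. prime p \<and> p \<le> L}" by blast
  qed
  have "radical (int P) \<le> \<Prod>(int ` {p. prime p \<and> p \<le> L})"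
    unfolding radical_def by (rule prod_subset_le[OF _ sub]) (auto dest: prime_ge_1_nat)
  also have "\<dots> = (\<Prod>p\<in>{p. prime p \<and> p \<le> L}. int p)"
    by (subst prod.reindex) auto
  also have "\<dots> = int (primorial L)" unfolding primorial_def by simp
  finally show ?thesis .
qed

lemma cop_sum1: assumes "coprime (a::int) b" shows "coprime a (a+b)"
proof (rule coprimeI)
  fix c assume c: "c dvd a" "c dvd a+b"
  then have "c dvd b" by (simp add: dvd_add_right_iff)
  then show "is_unit c" using assms c(1) coprime_common_divisor by blast
qed
lemma cop_sum2: assumes "coprime (a::int) b" shows "coprime b (a+b)"
proof (rule coprimeI)
  fix c assume c: "c dvd b" "c dvd a+b"
  then have "c dvd a" by (simp add: dvd_add_left_iff)
  then show "is_unit c" using assms c(1) coprime_common_divisor by blast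
qed


lemma key:
  fixes s :: real and u P L :: nat and x :: int
  assumes s: "s > 0" and Sz: "\<forall>A B C :: int. A \<noteq> 0 \<longrightarrow> B \<noteq> 0 \<longrightarrow> C \<noteq> 0 \<longrightarrow>
        coprime A B \<longrightarrow> coprime A C \<longrightarrow> coprime B C \<longrightarrow> A + B = C \<longrightarrow>
        real_of_int \<bar>A * B * C\<bar> < real_of_int (radical (A * B * C)) powr s"
    and u: "u \<ge> 1" and P: "P > 0" and L: "\<forall>p. prime p \<and> p dvd P \<longrightarrow> p \<le> L"
    and eq: "int P = x^2 - int u^2"
  shows "real P < real ((2*u)^2) * (real_of_int (radical (2 * int u)) * 4^L) powr s"
proof -
  define y where "y = \<bar>x\<bar>"
  have y0: "y \<ge> 0" and yx: "y^2 = x^2" unfolding y_def by auto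
  have yu: "y > int u"
  proof (rule ccontr)
    assume "\<not> y > int u"
    hence "y^2 \<le> (int u)^2" using y0 by (intro power_mono) auto
    thus False using eq yx P by simp
  qed
  define D1 where "D1 = y - int u"
  define U where "U = 2 * int u"
  have D1p: "D1 > 0" unfolding D1_def using yu by simp
  have Up: "U > 0" unfolding U_def using u by simp
  have DD: "D1 * (D1 + U) = int P" unfolding D1_def U_def using eq yx
    by (simp add: algebra_simps power2_eq_square)
  define g where "g = gcd D1 U"
  have gp: "g > 0" unfolding g_def using D1p by simp
  have gU: "g \<le> U" unfolding g_def using Up by (simp add: zdvd_imp_le)
  define a where "a = D1 div g"
  define b where "b = U div g"
  define c where "c = a + b"
  have ag: "D1 = a * g" unfolding a_def g_def by simp
  have bg: "U = b * g" unfolding b_def g_def by simp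
  have cg: "D1 + U = c * g" unfolding c_def using ag bg by (simp add: algebra_simps)
  have cop: "coprime a b" unfolding a_def b_def g_def using D1p by (intro div_gcd_coprime) auto
  have a0: "a \<noteq> 0" using ag D1p by auto
  have b0: "b \<noteq> 0" using bg Up by auto
  have c0: "c \<noteq> 0" using cg D1p Up by auto
  have lt: "real_of_int \<bar>a * b * c\<bar> < real_of_int (radical (a * b * c)) powr s"
    using Sz a0 b0 c0 cop cop_sum1[OF cop] cop_sum2[OF cop] unfolding c_def by blast
  have e1: "U * int P = (a*b*c) * g^3"
  proof -
    have "U * int P = U * (D1 * (D1 + U))" using DD by simp
    also have "\<dots> = (b*g) * ((a*g) * (c*g))" by (simp only: cg) (simp only: ag bg)
    also have "\<dots> = (a*b*c) * g^3" by (simp add: power3_eq_cube algebra_simps)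
    finally show ?thesis .
  qed
  have UP0: "U * int P \<noteq> 0" using Up P by simp
  have "radical (a*b*c) \<le> radical (U * int P)"
    by (rule rad_dvd) (use e1 UP0 in auto)
  also have "\<dots> \<le> radical U * radical (int P)" using rad_mult Up P by simp
  also have "\<dots> \<le> radical U * int (primorial L)"
    using rad_nat_bound[OF P L] rad_ge1[of U] by (intro mult_left_mono) auto
  finally have r1: "radical (a*b*c) \<le> radical U * int (primorial L)" .
  have "real (primorial L) \<le> real (4^L)" using primorial_le[of L] by (simp only: of_nat_le_iff)
  hence pl: "real (primorial L) \<le> 4^L" by simp
  have "real_of_int (radical (a*b*c)) \<le> real_of_int (radical U * int (primorial L))"
    using r1 by (simp only: of_int_le_iff)
  also have "\<dots> = real_of_int (radical U) * real (primorial L)" by simp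
  also have "\<dots> \<le> real_of_int (radical U) * 4^L"
    using pl rad_ge1[of U] by (intro mult_left_mono) auto
  finally have r2: "real_of_int (radical (a*b*c)) \<le> real_of_int (radical U) * 4^L" .
  define R where "R = (real_of_int (radical U) * 4^L) powr s"
  have r3: "real_of_int (radical (a*b*c)) powr s \<le> R"
    unfolding R_def using r2 s rad_ge1[of "a*b*c"] by (intro powr_mono2) auto
  have abc0: "a*b*c > 0"
  proof -
    have "U * int P > 0" using Up P by simp
    moreover have "g^3 > 0" using gp by simp
    ultimately show ?thesis using e1 by (simp add: zero_less_mult_iff)
  qed
  have "real_of_int (U * int P) = real_of_int (a*b*c) * real_of_int g^3"
    unfolding e1 by (simp only: of_int_mult of_int_power)
  also have "\<dots> < R * real_of_int g^3"
    using lt r3 abc0 gp by (intro mult_strict_right_mono) auto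
  also have "\<dots> \<le> R * real_of_int U^3"
    unfolding R_def using gp gU by (intro mult_left_mono power_mono) auto
  finally have "real_of_int U * real P < real_of_int U * (real_of_int U^2 * R)"
    by (simp add: power3_eq_cube power2_eq_square algebra_simps)
  hence "real P < real_of_int U^2 * R" using Up by simp
  then show ?thesis unfolding R_def U_def by simp
qed


lemma pow4_powr: "((4::real)^M) powr s = (4 powr s)^M"
proof -
  have "((4::real)^M) powr s = (4 powr real M) powr s" by (simp add: powr_realpow)
  also have "\<dots> = 4 powr (real M * s)" by (simp add: powr_powr)
  also have "\<dots> = (4 powr s)^M" by (simp add: powr_power)
  finally show ?thesis .
qed

theorem theorem3:
  fixes u r :: nat and A :: "nat \<Rightarrow> nat"
  assumes "weak_szpiro"
    and "u \<ge> 1" and "r \<ge> 1"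
    and "\<And>i. i < r \<Longrightarrow> A i > 0"
  shows "finite {(n :: nat list, x :: int).
            length n = r \<and> (\<forall>i<r. n ! i > 0) \<and>
            (\<Prod>i<r. int (A i ^ (n ! i) * fact (n ! i))) = x ^ 2 - int u ^ 2}"
proof -
  obtain s :: real where s: "s > 0" and Sz: "\<forall>A B C :: int. A \<noteq> 0 \<longrightarrow> B \<noteq> 0 \<longrightarrow> C \<noteq> 0 \<longrightarrow>
        coprime A B \<longrightarrow> coprime A C \<longrightarrow> coprime B C \<longrightarrow> A + B = C \<longrightarrow>
        real_of_int \<bar>A * B * C\<bar> < real_of_int (radical (A * B * C)) powr s"
    using assms(1) unfolding weak_szpiro_def by blast
  define Am where "Am = Max (A ` {..<r})"
  have Am: "\<And>i. i < r \<Longrightarrow> A i \<le> Am" unfolding Am_def by auto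
  have Am1: "Am \<ge> 1" using Am[of 0] assms(3) assms(4)[of 0] by simp
  define c0 where "c0 = real_of_int (radical (2 * int u))"
  define K where "K = real ((2*u)^2) * (c0 * 4^Am) powr s"
  define bb where "bb = (4::real) powr s"
  have c0p: "c0 > 0" unfolding c0_def using rad_ge1[of "2 * int u"] by simp
  have Kp: "K > 0" unfolding K_def using c0p assms(2) by simp
  have "(\<lambda>n. inverse (fact n) * bb^n) \<longlonglongrightarrow> 0"
    by (rule summable_LIMSEQ_zero[OF summable_exp])
  hence "eventually (\<lambda>n. inverse (fact n) * bb^n < inverse K) sequentially"
    using Kp by (intro order_tendstoD(2)) auto
  then obtain N0 where N0: "\<And>n. n \<ge> N0 \<Longrightarrow> inverse (fact n) * bb^n < inverse K"
    unfolding eventually_sequentially by blast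
  have N0': "K * bb^n < fact n" if "n \<ge> N0" for n
  proof -
    have "inverse (fact n) * bb^n < inverse K" using N0 that by blast
    hence "bb^n / fact n < 1 / K" by (simp add: field_simps)
    thus ?thesis using Kp by (simp add: field_simps)
  qed
  define PB where "PB = (Am^N0 * fact N0)^r"
  define X where "X = int PB + int u^2"
  let ?S = "{(n :: nat list, x :: int).
            length n = r \<and> (\<forall>i<r. n ! i > 0) \<and>
            (\<Prod>i<r. int (A i ^ (n ! i) * fact (n ! i))) = x ^ 2 - int u ^ 2}"
  have sub: "?S \<subseteq> {xs. set xs \<subseteq> {..<N0} \<and> length xs = r} \<times> {-X..X}"
  proof
    fix z assume "z \<in> ?S"
    then obtain n x where z: "z = (n, x)" and len: "length n = r"
      and eq0: "(\<Prod>i<r. int (A i ^ (n ! i) * fact (n ! i))) = x ^ 2 - int u ^ 2"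
      by blast
    define P where "P = (\<Prod>i<r. A i ^ (n ! i) * fact (n ! i))"
    have eq: "int P = x^2 - int u^2" unfolding P_def using eq0 by simp
    have Ppos: "P > 0" unfolding P_def using assms(4) by (intro prod_pos) auto
    have fne: "set n \<noteq> {}" using len assms(3) by auto
    define M where "M = Max (set n)"
    have Mge: "\<And>i. i < r \<Longrightarrow> n ! i \<le> M" unfolding M_def using len by simp
    have "M \<in> set n" unfolding M_def using fne by (intro Max_in) auto
    then obtain k where k: "k < r" "n ! k = M" using len by (auto simp: in_set_conv_nth)
    have bound: "M < N0"
    proof (rule ccontr)
      assume "\<not> M < N0"
      hence MN: "M \<ge> N0" by simp
      define L where "L = max Am M"
      have L: "\<forall>p. prime p \<and> p dvd P \<longrightarrow> p \<le> L"
      proof (intro allI impI)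
        fix p :: nat assume pp: "prime p \<and> p dvd P"
        then obtain i where i: "i < r" "p dvd A i ^ (n ! i) * fact (n ! i)"
          unfolding P_def by (auto simp: prime_dvd_prod_iff)
        hence "p dvd A i ^ (n ! i) \<or> p dvd fact (n ! i)"
          using pp by (simp add: prime_dvd_mult_iff)
        thus "p \<le> L"
        proof
          assume "p dvd A i ^ (n ! i)"
          hence "p dvd A i" using pp prime_dvd_power by blast
          hence "p \<le> A i" using assms(4)[OF i(1)] by (simp add: dvd_imp_le)
          thus ?thesis using Am[OF i(1)] unfolding L_def by simp
        next
          assume "p dvd fact (n ! i)"
          hence "p \<le> n ! i" using pp prime_dvd_fact_iff by blast
          thus ?thesis using Mge[OF i(1)] unfolding L_def by simp
        qed
      qed
      have kP: "real P < real ((2*u)^2) * (c0 * 4^L) powr s"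
        using key[OF s Sz assms(2) Ppos L eq] unfolding c0_def .
      have "(4::real)^L \<le> 4^Am * 4^M" unfolding L_def
        by (simp add: max_def) 
      hence "(c0 * 4^L) powr s \<le> (c0 * 4^Am * 4^M) powr s"
        using c0p s by (intro powr_mono2) auto
      also have "\<dots> = (c0 * 4^Am) powr s * bb^M"
        unfolding bb_def by (simp add: powr_mult pow4_powr)
      finally have "real ((2*u)^2) * (c0 * 4^L) powr s \<le> real ((2*u)^2) * ((c0 * 4^Am) powr s * bb^M)"
        by (rule mult_left_mono) simp
      hence "real P < K * bb^M" using kP unfolding K_def by (simp add: mult.assoc)
      moreover have "fact M \<le> P"
      proof -
        have "P = (A k ^ (n ! k) * fact (n ! k)) * (\<Prod>i\<in>{..<r} - {k}. A i ^ (n ! i) * fact (n ! i))"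
          unfolding P_def using k by (intro prod.remove) auto
        moreover have "(\<Prod>i\<in>{..<r} - {k}. A i ^ (n ! i) * fact (n ! i)) \<ge> 1"
          using assms(4) by (intro prod_ge_1) (auto simp: Suc_le_eq)
        moreover have "A k ^ (n ! k) \<ge> 1" using assms(4)[OF k(1)] by simp
        moreover have "fact M \<le> A k ^ M * fact M"
          using mult_le_mono1[of 1 "A k ^ M" "fact M"] \<open>A k ^ (n ! k) \<ge> 1\<close> k by simp
        ultimately show ?thesis using k mult_le_mono2[of 1 "\<Prod>i\<in>{..<r} - {k}. A i ^ (n ! i) * fact (n ! i)" "A k ^ M * fact M"]
          by simp
      qed
      hence "real (fact M) \<le> real P" by (simp only: of_nat_le_iff)
      hence "fact M \<le> real P" by simp
      ultimately show False using N0'[OF MN] by simp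
    qed
    have nb: "set n \<subseteq> {..<N0}"
    proof
      fix v assume "v \<in> set n"
      then obtain i where i: "i < r" "n ! i = v" using len by (auto simp: in_set_conv_nth)
      then show "v \<in> {..<N0}" using Mge[OF i(1)] bound by auto
    qed
    have "P \<le> (\<Prod>i<r. Am^N0 * fact N0)"
    proof (unfold P_def, rule prod_mono, safe)
      fix i assume i: "i < r"
      have ni: "n ! i \<le> N0" using Mge[OF i] bound by simp
      have "A i ^ (n ! i) \<le> Am ^ (n ! i)" using Am[OF i] by (simp add: power_mono)
      also have "\<dots> \<le> Am ^ N0" using Am1 ni by (simp add: power_increasing)
      finally show "A i ^ (n ! i) * fact (n ! i) \<le> Am ^ N0 * fact N0"
        using ni by (intro mult_mono fact_mono) auto
    qed
    hence PPB: "P \<le> PB" unfolding PB_def by simp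
    have "x^2 \<le> X" unfolding X_def using eq PPB by simp
    moreover have "\<bar>x\<bar> \<le> x^2"
    proof (cases "x = 0")
      case False
      hence "1 \<le> \<bar>x\<bar>" by simp
      hence "\<bar>x\<bar> * 1 \<le> \<bar>x\<bar> * \<bar>x\<bar>" by (intro mult_left_mono) auto
      thus ?thesis by (simp add: power2_eq_square abs_mult_self_eq)
    qed simp
    ultimately have "\<bar>x\<bar> \<le> X" by simp
    then show "z \<in> {xs. set xs \<subseteq> {..<N0} \<and> length xs = r} \<times> {-X..X}"
      using z nb len by auto
  qed
  show ?thesis
    by (rule finite_subset[OF sub]) (auto intro: finite_lists_length_eq)
qed

end
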